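(* Let $\mathcal G$ be an ample groupoid and $S$ a semifield. If the Steinberg algebra $A_S(\mathcal G)$ is congruence-simple, then (1) $S$ is either a field or the Boolean semifield $\mathbb B$, and (2) $\mathcal G$ is both minimal and effective.
   Context: A semifield is a nontrivial commutative semiring (commutative monoid addition with $0$, commutative associative multiplication with $1$, distributivity, $0$ absorbing) in which every nonzero element has a multiplicative inverse. $\mathbb B=(\{0,1\},\text{or},\text{and})$. A congruence on a hemiring $R$ is an equivalence relation $\sim$ such that $r\sim s$ implies $t+r\sim t+s$, $tr\sim ts$, $rt\sim st$ for all $t$; $R$ is congruence-simple if its only congruences are $R\times R$ and the diagonal. An ample groupoid is a topological groupoid whose unit space $\mathcal G^{(0)}$ is locally compact Hausdorff and totally disconnected and whose source and range maps $s,r$ are local homeomorphisms ($\mathcal G$ need not be Hausdorff). A subset $D\subseteq\mathcal G^{(0)}$ is invariant if $s(\gamma)\in D$ implies $r(\gamma)\in D$ for all $\gamma$. $\mathcal G$ is minimal if $\mathcal G^{(0)}$ has no open invariant subsets other than $\varnothing$ and $\mathcal G^{(0)}$. $\mathcal G$ is effective if the interior of the isotropy subgroupoid $\operatorname{Iso}(\mathcal G)=\{\gamma: s(\gamma)=r(\gamma)\}$ equals $\mathcal G^{(0)}$. The Steinberg algebra $A_S(\mathcal G)$ is the set of functions $\mathcal G\to S$ of the form $\sum_{U\in F}s_U1_U$ with $F$ a finite set of compact open bisections (subsets on which $s,r$ are homeomorphisms onto their images), with pointwise addition and convolution $(f*g)(\gamma)=\sum_{\alpha\beta=\gamma}f(\alpha)g(\beta)$.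 *)

theory Defs
  imports "HOL-Analysis.Analysis"
begin

definition semifield_ax :: "'s::comm_semiring_1 itself \<Rightarrow> bool" where
  "semifield_ax _ \<longleftrightarrow> (\<forall>x::'s. x \<noteq> 0 \<longrightarrow> (\<exists>y. x * y = 1))"

definition is_field_sf :: "'s::comm_semiring_1 itself \<Rightarrow> bool" where
  "is_field_sf _ \<longleftrightarrow> semifield_ax TYPE('s) \<and> (\<forall>x::'s. \<exists>y. x + y = 0)"

definition is_boolean_sf :: "'s::comm_semiring_1 itself \<Rightarrow> bool" where
  "is_boolean_sf _ \<longleftrightarrow> (\<exists>f :: 's \<Rightarrow> bool. bij f \<and> f 0 = False \<and> f 1 = True \<and>
      (\<forall>x y. f (x + y) = (f x \<or> f y) \<and> f (x * y) = (f x \<and> f y)))"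

text \<open>A groupoid with arrow set topspace T, source s, range r, partial multiplication m
(m a b defined when s a = r b) and inverse i. Units are elements of G.\<close>

definition composable_pairs :: "'g topology \<Rightarrow> ('g \<Rightarrow> 'g) \<Rightarrow> ('g \<Rightarrow> 'g) \<Rightarrow> ('g \<times> 'g) set" where
  "composable_pairs T s r = {(a, b). a \<in> topspace T \<and> b \<in> topspace T \<and> s a = r b}"

definition unit_space :: "'g topology \<Rightarrow> ('g \<Rightarrow> 'g) \<Rightarrow> 'g set" where
  "unit_space T s = s ` topspace T"

definition groupoid :: "'g set \<Rightarrow> ('g \<Rightarrow> 'g) \<Rightarrow> ('g \<Rightarrow> 'g) \<Rightarrow> ('g \<Rightarrow> 'g \<Rightarrow> 'g) \<Rightarrow> ('g \<Rightarrow> 'g) \<Rightarrow> bool" where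
  "groupoid G s r m i \<longleftrightarrow>
     (\<forall>g\<in>G. s g \<in> G \<and> r g \<in> G \<and> i g \<in> G
        \<and> s (s g) = s g \<and> r (s g) = s g \<and> s (r g) = r g \<and> r (r g) = r g
        \<and> m (r g) g = g \<and> m g (s g) = g
        \<and> s (i g) = r g \<and> r (i g) = s g \<and> m g (i g) = r g \<and> m (i g) g = s g)
   \<and> (\<forall>a\<in>G. \<forall>b\<in>G. s a = r b \<longrightarrow> m a b \<in> G \<and> s (m a b) = s b \<and> r (m a b) = r a)
   \<and> (\<forall>a\<in>G. \<forall>b\<in>G. \<forall>c\<in>G. s a = r b \<longrightarrow> s b = r c \<longrightarrow> m (m a b) c = m a (m b c))"

definition local_homeo :: "'a topology \<Rightarrow> 'b topology \<Rightarrow> ('a \<Rightarrow> 'b) \<Rightarrow> bool" where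
  "local_homeo X Y f \<longleftrightarrow> f ` topspace X \<subseteq> topspace Y \<and>
     (\<forall>x\<in>topspace X. \<exists>U. openin X U \<and> x \<in> U \<and> openin Y (f ` U) \<and>
        homeomorphic_map (subtopology X U) (subtopology Y (f ` U)) f)"

definition totally_disconnected_space :: "'a topology \<Rightarrow> bool" where
  "totally_disconnected_space X \<longleftrightarrow> (\<forall>x\<in>topspace X. connected_component_of_set X x = {x})"

definition ample_groupoid ::
  "'g topology \<Rightarrow> ('g \<Rightarrow> 'g) \<Rightarrow> ('g \<Rightarrow> 'g) \<Rightarrow> ('g \<Rightarrow> 'g \<Rightarrow> 'g) \<Rightarrow> ('g \<Rightarrow> 'g) \<Rightarrow> bool" where
  "ample_groupoid T s r m i \<longleftrightarrow>
     groupoid (topspace T) s r m i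
   \<and> continuous_map (subtopology (prod_topology T T) (composable_pairs T s r)) T (\<lambda>(a, b). m a b)
   \<and> continuous_map T T i
   \<and> locally_compact_space (subtopology T (unit_space T s))
   \<and> Hausdorff_space (subtopology T (unit_space T s))
   \<and> totally_disconnected_space (subtopology T (unit_space T s))
   \<and> local_homeo T (subtopology T (unit_space T s)) s
   \<and> local_homeo T (subtopology T (unit_space T s)) r"

definition compact_open_bisection ::
  "'g topology \<Rightarrow> ('g \<Rightarrow> 'g) \<Rightarrow> ('g \<Rightarrow> 'g) \<Rightarrow> 'g set \<Rightarrow> bool" where
  "compact_open_bisection T s r U \<longleftrightarrow> openin T U \<and> compactin T U
     \<and> homeomorphic_map (subtopology T U) (subtopology T (s ` U)) s
     \<and> homeomorphic_map (subtopology T U) (subtopology T (r ` U)) r"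

definition invariant_set :: "'g topology \<Rightarrow> ('g \<Rightarrow> 'g) \<Rightarrow> ('g \<Rightarrow> 'g) \<Rightarrow> 'g set \<Rightarrow> bool" where
  "invariant_set T s r D \<longleftrightarrow> D \<subseteq> unit_space T s \<and>
     (\<forall>g\<in>topspace T. s g \<in> D \<longrightarrow> r g \<in> D)"

definition minimal_groupoid :: "'g topology \<Rightarrow> ('g \<Rightarrow> 'g) \<Rightarrow> ('g \<Rightarrow> 'g) \<Rightarrow> bool" where
  "minimal_groupoid T s r \<longleftrightarrow>
     (\<forall>D. openin (subtopology T (unit_space T s)) D \<and> invariant_set T s r D
          \<longrightarrow> D = {} \<or> D = unit_space T s)"

definition isotropy :: "'g topology \<Rightarrow> ('g \<Rightarrow> 'g) \<Rightarrow> ('g \<Rightarrow> 'g) \<Rightarrow> 'g set" where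
  "isotropy T s r = {g \<in> topspace T. s g = r g}"

definition effective_groupoid :: "'g topology \<Rightarrow> ('g \<Rightarrow> 'g) \<Rightarrow> ('g \<Rightarrow> 'g) \<Rightarrow> bool" where
  "effective_groupoid T s r \<longleftrightarrow> T interior_of (isotropy T s r) = unit_space T s"

definition steinberg_algebra ::
  "'g topology \<Rightarrow> ('g \<Rightarrow> 'g) \<Rightarrow> ('g \<Rightarrow> 'g) \<Rightarrow> 's::comm_semiring_1 itself \<Rightarrow> ('g \<Rightarrow> 's) set" where
  "steinberg_algebra T s r _ =
     {f. \<exists>F c. finite F \<and> (\<forall>U\<in>F. compact_open_bisection T s r U) \<and>
           f = (\<lambda>x. \<Sum>U\<in>F. c U * (if x \<in> U then 1 else 0))}"

text \<open>The sum is taken over the pairs with f a \<noteq> 0 and g b \<noteq> 0 (the other terms vanish);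
for elements of the Steinberg algebra this index set is finite.\<close>
definition convolution ::
  "'g topology \<Rightarrow> ('g \<Rightarrow> 'g) \<Rightarrow> ('g \<Rightarrow> 'g) \<Rightarrow> ('g \<Rightarrow> 'g \<Rightarrow> 'g) \<Rightarrow>
   ('g \<Rightarrow> 's::comm_semiring_1) \<Rightarrow> ('g \<Rightarrow> 's) \<Rightarrow> 'g \<Rightarrow> 's" where
  "convolution T s r m f g x =
     (\<Sum>(a, b) \<in> {(a, b) \<in> composable_pairs T s r. m a b = x \<and> f a \<noteq> 0 \<and> g b \<noteq> 0}. f a * g b)"

definition hemiring_congruence :: "'a set \<Rightarrow> ('a \<Rightarrow> 'a \<Rightarrow> 'a) \<Rightarrow> ('a \<Rightarrow> 'a \<Rightarrow> 'a) \<Rightarrow> ('a \<times> 'a) set \<Rightarrow> bool" where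
  "hemiring_congruence A add mul R \<longleftrightarrow> equiv A R \<and>
     (\<forall>(x, y)\<in>R. \<forall>t\<in>A. (add t x, add t y) \<in> R \<and> (mul t x, mul t y) \<in> R \<and> (mul x t, mul y t) \<in> R)"

definition congruence_simple :: "'a set \<Rightarrow> ('a \<Rightarrow> 'a \<Rightarrow> 'a) \<Rightarrow> ('a \<Rightarrow> 'a \<Rightarrow> 'a) \<Rightarrow> bool" where
  "congruence_simple A add mul \<longleftrightarrow>
     (\<forall>R. hemiring_congruence A add mul R \<longrightarrow> R = A \<times> A \<or> R = Id_on A)"

end

theory Submission
  imports Defs
begin



lemma local_homeo_cont:
  assumes "local_homeo A B f" shows "continuous_map A B f"
proof -
  have img: "f \<in> topspace A \<rightarrow> topspace B" using assms unfolding local_homeo_def by blast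
  have "openin A {x \<in> topspace A. f x \<in> V}" if V: "openin B V" for V
  proof (subst openin_subopen, intro ballI)
    fix x assume x: "x \<in> {x \<in> topspace A. f x \<in> V}"
    then obtain U where U: "openin A U" "x \<in> U" "openin B (f ` U)"
      "homeomorphic_map (subtopology A U) (subtopology B (f ` U)) f"
      using assms unfolding local_homeo_def by blast
    have "continuous_map (subtopology A U) B f"
      using homeomorphic_imp_continuous_map[OF U(4)] continuous_map_into_fulltopology by blast
    then have "openin (subtopology A U) {y \<in> topspace (subtopology A U). f y \<in> V}"
      using V openin_continuous_map_preimage by blast
    then have "openin A {y \<in> topspace (subtopology A U). f y \<in> V}"
      using U(1) openin_trans_full by blast
    moreover have "{y \<in> topspace (subtopology A U). f y \<in> V} \<subseteq> {x \<in> topspace A. f x \<in> V}" by auto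
    ultimately show "\<exists>T. openin A T \<and> x \<in> T \<and> T \<subseteq> {x \<in> topspace A. f x \<in> V}"
      using x U(2) by (intro exI[of _ "{y \<in> topspace (subtopology A U). f y \<in> V}"]) auto
  qed
  then show ?thesis using img unfolding continuous_map_def by blast
qed

lemma local_homeo_open:
  assumes "local_homeo A B f" "openin A W" shows "openin B (f ` W)"
proof (subst openin_subopen, intro ballI)
  fix y assume "y \<in> f ` W"
  then obtain x where x: "x \<in> W" "y = f x" by blast
  then have "x \<in> topspace A" using assms(2) openin_subset by blast
  then obtain U where U: "openin A U" "x \<in> U" "openin B (f ` U)"
      "homeomorphic_map (subtopology A U) (subtopology B (f ` U)) f"
      using assms unfolding local_homeo_def by blast
  have "openin (subtopology A U) (W \<inter> U)"
    using assms(2) by (simp add: openin_subtopology_Int)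
  then have "openin (subtopology B (f ` U)) (f ` (W \<inter> U))"
    using homeomorphic_imp_open_map[OF U(4)] unfolding open_map_def by blast
  then have "openin B (f ` (W \<inter> U))" using U(3) openin_trans_full by blast
  then show "\<exists>T. openin B T \<and> y \<in> T \<and> T \<subseteq> f ` W" using x U(2) by blast
qed

lemma local_homeo_nbhd:
  assumes "local_homeo A B f" "x \<in> topspace A"
  obtains U where "openin A U" "x \<in> U" "inj_on f U"
  using assms unfolding local_homeo_def
  by (metis homeomorphic_imp_injective_map openin_subset topspace_subtopology_subset)

lemma compact_open_nbhd:
  assumes lc: "locally_compact_space X" and H: "Hausdorff_space X"
    and td: "totally_disconnected_space X" and O: "openin X W0" and x: "x \<in> W0"
  obtains K where "openin X K" "compactin X K" "x \<in> K" "K \<subseteq> W0"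
proof -
  have "neighbourhood_base_of (\<lambda>C. compactin X C \<and> closedin X C) X"
    using lc H locally_compact_space_neighbourhood_base_closedin by blast
  then have "\<exists>U V. openin X U \<and> (compactin X V \<and> closedin X V) \<and> x \<in> U \<and> U \<subseteq> V \<and> V \<subseteq> W0"
    using O x unfolding neighbourhood_base_of by blast
  then obtain V C where VC: "openin X V" "compactin X C" "closedin X C" "x \<in> V" "V \<subseteq> C" "C \<subseteq> W0"
    by blast
  have xt: "x \<in> topspace X" using VC openin_subset by blast
  let ?Y = "subtopology X C"
  have cY: "compact_space ?Y" using VC compact_space_subtopology by blast
  have hY: "Hausdorff_space ?Y" using H Hausdorff_space_subtopology by blast
  have xC: "x \<in> C" using VC by blast
  have Ct: "C \<subseteq> topspace X" using VC closedin_subset by blast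
  have c1: "closedin ?Y {x}"
    using hY xC Ct by (intro closedin_Hausdorff_singleton) auto
  have c2: "closedin ?Y (C - V)"
  proof -
    have "closedin X (topspace X - V)" using VC by blast
    then have "closedin ?Y (C \<inter> (topspace X - V))" by (simp add: closedin_subtopology_Int_closed)
    moreover have "C \<inter> (topspace X - V) = C - V" using Ct by blast
    ultimately show ?thesis by simp
  qed
  have dis: "disjnt D {x} \<or> disjnt D (C - V)" if D: "connectedin ?Y D" for D
  proof (cases "x \<in> D")
    case True
    have "connectedin X D" using D connectedin_subtopology by blast
    then have "D \<subseteq> connected_component_of_set X x" using True connected_component_of_maximal by metis
    also have "\<dots> = {x}" using td xt unfolding totally_disconnected_space_def by blast
    finally show ?thesis using VC by (auto simp: disjnt_def)
  qed (auto simp: disjnt_def)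
  have "separated_between ?Y {x} (C - V)"
    using cut_wire_fence_theorem[OF cY hY c1 c2] dis by blast
  then obtain P Q where PQ: "openin ?Y P" "openin ?Y Q" "P \<union> Q = topspace ?Y" "disjnt P Q" "{x} \<subseteq> P" "C - V \<subseteq> Q"
    unfolding separated_between_def by blast
  have tY: "topspace ?Y = C" using Ct by auto
  have PV: "P \<subseteq> V"
  proof
    fix y assume "y \<in> P"
    then have "y \<in> C" "y \<notin> Q" using PQ(3,4) tY by (auto simp: disjnt_def)
    then show "y \<in> V" using PQ(6) by blast
  qed
  have "openin X P"
  proof -
    obtain O' where "openin X O'" "P = O' \<inter> C" using PQ(1) by (auto simp: openin_subtopology)
    then have "P = O' \<inter> V" using PV VC by blast
    then show ?thesis using \<open>openin X O'\<close> VC by blast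
  qed
  moreover have "closedin ?Y P"
  proof -
    have "P = topspace ?Y - Q" using PQ(3,4) by (auto simp: disjnt_def)
    then show ?thesis using PQ(2) by blast
  qed
  then have "closedin X P" using VC closedin_trans_full by blast
  then have "compactin X P" using VC PV closed_compactin by blast
  moreover have "x \<in> P" using PQ(5) by simp
  moreover have "P \<subseteq> W0" using PV VC by blast
  ultimately show ?thesis using that by blast
qed




definition cob where "cob T s r U \<equiv> compact_open_bisection T s r U"

locale AG =
  fixes T :: "'g topology" and s r :: "'g \<Rightarrow> 'g" and m :: "'g \<Rightarrow> 'g \<Rightarrow> 'g" and i :: "'g \<Rightarrow> 'g"
  assumes ample: "ample_groupoid T s r m i"
begin

abbreviation "G \<equiv> topspace T"
abbreviation "U0 \<equiv> unit_space T s"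
abbreviation "X \<equiv> subtopology T U0"

lemma grp: "groupoid G s r m i" using ample unfolding ample_groupoid_def by blast

lemma gf:
  assumes "g \<in> G"
  shows "s g \<in> G" "r g \<in> G" "i g \<in> G" "s (s g) = s g" "r (s g) = s g" "s (r g) = r g" "r (r g) = r g"
    "m (r g) g = g" "m g (s g) = g" "s (i g) = r g" "r (i g) = s g" "m g (i g) = r g" "m (i g) g = s g"
  using grp assms unfolding groupoid_def by blast+

lemma gm:
  assumes "a \<in> G" "b \<in> G" "s a = r b"
  shows "m a b \<in> G" "s (m a b) = s b" "r (m a b) = r a"
  using grp assms unfolding groupoid_def by blast+

lemma ga:
  assumes "a \<in> G" "b \<in> G" "c \<in> G" "s a = r b" "s b = r c"
  shows "m (m a b) c = m a (m b c)"
  using grp assms unfolding groupoid_def by blast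

lemma U0_sub: "U0 \<subseteq> G" unfolding unit_space_def using gf by blast

lemma unit:
  assumes "u \<in> U0" shows "u \<in> G" "s u = u" "r u = u"
  using assms gf unfolding unit_space_def by auto

lemma contm: "continuous_map (subtopology (prod_topology T T) (composable_pairs T s r)) T (\<lambda>(a, b). m a b)"
  using ample unfolding ample_groupoid_def by blast
lemma conti: "continuous_map T T i"
  using ample unfolding ample_groupoid_def by blast
lemma lcX: "locally_compact_space X"
  using ample unfolding ample_groupoid_def by blast
lemma HX: "Hausdorff_space X"
  using ample unfolding ample_groupoid_def by blast
lemma tdX: "totally_disconnected_space X"
  using ample unfolding ample_groupoid_def by blast
lemma lhs: "local_homeo T X s"
  using ample unfolding ample_groupoid_def by blast
lemma lhr: "local_homeo T X r"
  using ample unfolding ample_groupoid_def by blast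

lemma conts: "continuous_map T X s" using lhs local_homeo_cont by blast
lemma contr: "continuous_map T X r" using lhr local_homeo_cont by blast
lemma contsT: "continuous_map T T s" using conts continuous_map_into_fulltopology by blast
lemma contrT: "continuous_map T T r" using contr continuous_map_into_fulltopology by blast

lemma U0_open: "openin T U0"
proof (subst openin_subopen, intro ballI)
  fix u assume u: "u \<in> U0"
  then have uG: "u \<in> G" using U0_sub by blast
  obtain U where U: "openin T U" "u \<in> U" "inj_on s U" using local_homeo_nbhd[OF lhs uG] by blast
  let ?N = "{y \<in> G. s y \<in> U} \<inter> U"
  have "openin T ?N" using openin_continuous_map_preimage[OF contsT U(1)] U(1) by blast
  moreover have "u \<in> ?N" using uG U unit[OF u] by auto
  moreover have "?N \<subseteq> U0"
  proof
    fix y assume y: "y \<in> ?N"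
    then have "s (s y) = s y" "y \<in> G" using gf by auto
    then have "s y = y" using U(3) y by (metis (no_types, lifting) IntD1 IntD2 inj_on_def mem_Collect_eq)
    then show "y \<in> U0" using y unfolding unit_space_def by force
  qed
  ultimately show "\<exists>T'. openin T T' \<and> u \<in> T' \<and> T' \<subseteq> U0" by blast
qed

lemma cob_intro:
  assumes "openin T W" "compactin T W" "inj_on s W" "inj_on r W"
  shows "cob T s r W"
proof -
  have WG: "W \<subseteq> G" using assms openin_subset by blast
  have hom: "homeomorphic_map (subtopology T W) (subtopology T (f ` W)) f"
    if cf: "continuous_map T X f" and inj: "inj_on f W" for f
  proof (rule continuous_imp_homeomorphic_map)
    have fW: "f ` W \<subseteq> U0" using cf WG by (auto simp: continuous_map_def)
    show "continuous_map (subtopology T W) (subtopology T (f ` W)) f"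
      using cf by (intro continuous_map_into_subtopology continuous_map_from_subtopology)
        (auto simp: continuous_map_in_subtopology)
    show "compact_space (subtopology T W)" using assms compact_space_subtopology by blast
    have "subtopology T (f ` W) = subtopology X (f ` W)" using fW
      by (simp add: subtopology_subtopology inf_absorb2)
    then show "Hausdorff_space (subtopology T (f ` W))" using HX Hausdorff_space_subtopology by metis
    show "f ` topspace (subtopology T W) = topspace (subtopology T (f ` W))"
      using WG fW U0_sub by auto
    show "inj_on f (topspace (subtopology T W))" using inj by (simp add: inj_on_subset)
  qed
  show ?thesis unfolding cob_def compact_open_bisection_def
    using assms hom[OF conts] hom[OF contr] by blast
qed

lemma cob_dest:
  assumes "cob T s r W"
  shows "openin T W" "compactin T W" "inj_on s W" "inj_on r W" "W \<subseteq> G"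
proof -
  show o: "openin T W" using assms unfolding cob_def compact_open_bisection_def by blast
  then have WG: "W \<subseteq> G" using openin_subset by blast
  then show "W \<subseteq> G" .
  show "compactin T W" using assms unfolding cob_def compact_open_bisection_def by blast
  show "inj_on s W" "inj_on r W" using assms WG unfolding cob_def compact_open_bisection_def
    by (metis homeomorphic_imp_injective_map topspace_subtopology_subset)+
qed

lemma local_basis:
  assumes g: "g \<in> G" and O: "openin T O'" "g \<in> O'" and V: "openin X V" "s g \<in> V"
  obtains W where "cob T s r W" "g \<in> W" "W \<subseteq> O'" "s ` W \<subseteq> V"
proof -
  obtain U1 where U1: "openin T U1" "g \<in> U1" "openin X (s ` U1)"
      "homeomorphic_map (subtopology T U1) (subtopology X (s ` U1)) s"
    using lhs g unfolding local_homeo_def by blast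
  obtain U2 where U2: "openin T U2" "g \<in> U2" "inj_on r U2" using local_homeo_nbhd[OF lhr g] by blast
  let ?N = "U1 \<inter> U2 \<inter> O'"
  have N: "openin T ?N" using U1 U2 O by blast
  have sN: "openin X (s ` ?N)" using local_homeo_open[OF lhs N] .
  let ?V = "s ` ?N \<inter> V"
  have "openin X ?V" "s g \<in> ?V" using sN V U1 U2 O g by auto
  then obtain K where K: "openin X K" "compactin X K" "s g \<in> K" "K \<subseteq> ?V"
    using compact_open_nbhd[OF lcX HX tdX] by metis
  let ?W = "{y \<in> ?N. s y \<in> K}"
  have W1: "openin T ?W"
  proof -
    have "openin T {y \<in> G. s y \<in> K}" using openin_continuous_map_preimage[OF conts K(1)] by simp
    moreover have "?W = ?N \<inter> {y \<in> G. s y \<in> K}" using N openin_subset by blast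
    ultimately show ?thesis using N by auto
  qed
  have sW: "s ` ?W = K" using K(4) by auto
  have U1G: "U1 \<subseteq> G" using U1 openin_subset by blast
  have W2: "compactin T ?W"
  proof -
    have sub: "?W \<subseteq> topspace (subtopology T U1)" using U1G by auto
    have "compactin (subtopology X (s ` U1)) K" using K(2,4) by (auto simp: compactin_subtopology)
    then have "compactin (subtopology T U1) ?W"
      using homeomorphic_map_compactness[OF U1(4) sub] sW by simp
    then show ?thesis by (simp add: compactin_subtopology)
  qed
  have W3: "inj_on s ?W"
  proof (rule inj_on_subset)
    show "inj_on s (topspace (subtopology T U1))" using homeomorphic_imp_injective_map[OF U1(4)] .
    show "?W \<subseteq> topspace (subtopology T U1)" using U1G by auto
  qed
  have W4: "inj_on r ?W" using U2(3) by (rule inj_on_subset) auto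
  show ?thesis
    using that[OF cob_intro[OF W1 W2 W3 W4]] g U1 U2 O K sW by auto
qed

end



definition bprod :: "('g \<Rightarrow> 'g) \<Rightarrow> ('g \<Rightarrow> 'g) \<Rightarrow> ('g \<Rightarrow> 'g \<Rightarrow> 'g) \<Rightarrow> 'g set \<Rightarrow> 'g set \<Rightarrow> 'g set" where
  "bprod s r m U V = (\<lambda>(a, b). m a b) ` {(a, b). a \<in> U \<and> b \<in> V \<and> s a = r b}"

context AG begin

lemma bprod_mem: "x \<in> bprod s r m U V \<longleftrightarrow> (\<exists>a b. a \<in> U \<and> b \<in> V \<and> s a = r b \<and> x = m a b)"
  unfolding bprod_def by auto

lemma cob_prod:
  assumes U: "cob T s r U" and V: "cob T s r V"
  shows "cob T s r (bprod s r m U V)"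
proof -
  note Ud = cob_dest[OF U] and Vd = cob_dest[OF V]
  let ?P = "{(a, b). a \<in> U \<and> b \<in> V \<and> s a = r b}"
  let ?PT = "prod_topology T T"
  have PUV: "?P \<subseteq> U \<times> V" by auto
  have "closedin (subtopology ?PT (U \<times> V)) {x \<in> topspace (subtopology ?PT (U \<times> V)). (s \<circ> fst) x = (r \<circ> snd) x}"
  proof (rule closedin_continuous_maps_eq[OF HX])
    show "continuous_map (subtopology ?PT (U \<times> V)) X (s \<circ> fst)"
      by (intro continuous_map_compose[OF _ conts] continuous_map_from_subtopology continuous_map_fst)
    show "continuous_map (subtopology ?PT (U \<times> V)) X (r \<circ> snd)"
      by (intro continuous_map_compose[OF _ contr] continuous_map_from_subtopology continuous_map_snd)
  qed
  moreover have "{x \<in> topspace (subtopology ?PT (U \<times> V)). (s \<circ> fst) x = (r \<circ> snd) x} = ?P"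
    using Ud(5) Vd(5) by auto
  ultimately have "closedin (subtopology ?PT (U \<times> V)) ?P" by simp
  moreover have "compact_space (subtopology ?PT (U \<times> V))"
    using Ud(2) Vd(2) by (intro compact_space_subtopology) (simp add: compactin_Times)
  ultimately have "compactin (subtopology ?PT (U \<times> V)) ?P" using closedin_compact_space by blast
  then have "compactin ?PT ?P" by (simp add: compactin_subtopology)
  moreover have "?P \<subseteq> composable_pairs T s r" unfolding composable_pairs_def using Ud(5) Vd(5) by auto
  ultimately have "compactin (subtopology ?PT (composable_pairs T s r)) ?P" by (simp add: compactin_subtopology)
  then have C: "compactin T (bprod s r m U V)" unfolding bprod_def using image_compactin[OF _ contm] by blast
  obtain g where g: "homeomorphic_maps (subtopology T U) (subtopology T (r ` U)) r g"
    using U unfolding cob_def compact_open_bisection_def homeomorphic_map_maps by blast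
  have gc: "continuous_map (subtopology T (r ` U)) (subtopology T U) g"
    and grg: "\<And>a. a \<in> U \<Longrightarrow> g (r a) = a"
    using g Ud(5) unfolding homeomorphic_maps_def by auto
  have rUG: "r ` U \<subseteq> G" using Ud(5) gf by blast
  have gU: "\<And>y. y \<in> r ` U \<Longrightarrow> g y \<in> U"
    using gc rUG unfolding continuous_map_def by auto
  have rU: "openin X (r ` U)" using local_homeo_open[OF lhr Ud(1)] .
  let ?N = "{y \<in> G. r y \<in> r ` U}"
  have N: "openin T ?N" using openin_continuous_map_preimage[OF contr rU] .
  let ?phi = "\<lambda>y. m (i (g (r y))) y"
  have c1: "continuous_map (subtopology T ?N) (subtopology T (r ` U)) r"
    by (intro continuous_map_into_subtopology continuous_map_from_subtopology contrT) auto
  have c2: "continuous_map (subtopology T ?N) T (\<lambda>y. i (g (r y)))"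
    using continuous_map_compose[OF continuous_map_into_fulltopology[OF continuous_map_compose[OF c1 gc]] conti]
    by (simp add: o_def continuous_map_in_subtopology)
  have c3: "continuous_map (subtopology T ?N) ?PT (\<lambda>y. (i (g (r y)), y))"
    using c2 by (intro continuous_map_pairedI) (auto intro: continuous_map_from_subtopology)
  have c4: "continuous_map (subtopology T ?N) (subtopology ?PT (composable_pairs T s r)) (\<lambda>y. (i (g (r y)), y))"
  proof (rule continuous_map_into_subtopology[OF c3])
    show "(\<lambda>y. (i (g (r y)), y)) \<in> topspace (subtopology T ?N) \<rightarrow> composable_pairs T s r"
    proof
      fix y assume "y \<in> topspace (subtopology T ?N)"
      then have y: "y \<in> G" "r y \<in> r ` U" by auto
      then have "g (r y) \<in> U" using gU by blast
      then obtain a where a: "a \<in> U" "g (r y) = a" by blast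
      then have "r a = r y" using y grg by auto
      then show "(i (g (r y)), y) \<in> composable_pairs T s r"
        unfolding composable_pairs_def using a y Ud(5) gf by auto
    qed
  qed
  have c5: "continuous_map (subtopology T ?N) T ?phi"
    using continuous_map_compose[OF c4 contm] by (simp add: o_def)
  let ?N' = "{y \<in> topspace (subtopology T ?N). ?phi y \<in> V}"
  have "openin (subtopology T ?N) ?N'" using openin_continuous_map_preimage[OF c5 Vd(1)] .
  then have oN': "openin T ?N'" using N openin_trans_full by blast
  have eq: "bprod s r m U V = ?N'"
  proof
    show "bprod s r m U V \<subseteq> ?N'"
    proof
      fix x assume "x \<in> bprod s r m U V"
      then obtain a b where ab: "a \<in> U" "b \<in> V" "s a = r b" "x = m a b" unfolding bprod_mem by blast
      have aG: "a \<in> G" and bG: "b \<in> G" using ab Ud(5) Vd(5) by auto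
      have xG: "x \<in> G" and rx: "r x = r a" using gm[OF aG bG ab(3)] ab by auto
      have "?phi x = m (i a) (m a b)" using rx grg ab by simp
      also have "\<dots> = m (m (i a) a) b"
        using ga[OF gf(3)[OF aG] aG bG] gf[OF aG] ab by simp
      also have "\<dots> = b" using gf[OF aG] gf[OF bG] ab by simp
      finally show "x \<in> ?N'" using xG rx ab by auto
    qed
    show "?N' \<subseteq> bprod s r m U V"
    proof
      fix y assume "y \<in> ?N'"
      then have y: "y \<in> G" "r y \<in> r ` U" "?phi y \<in> V" by auto
      define a where "a = g (r y)"
      have aU: "a \<in> U" using gU y a_def by blast
      have aG: "a \<in> G" using aU Ud(5) by blast
      have ra: "r a = r y" using y(2) grg a_def by auto
      have iaG: "i a \<in> G" using gf aG by blast
      have c: "s (i a) = r y" using gf(10)[OF aG] ra by simp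
      have b: "m (i a) y \<in> V" using y a_def by simp
      have sab: "s a = r (m (i a) y)" using gm[OF iaG y(1) c] gf[OF aG] by simp
      have "m a (m (i a) y) = m (m a (i a)) y"
        using ga[OF aG iaG y(1)] gf[OF aG] c by simp
      also have "\<dots> = y" using gf[OF aG] gf[OF y(1)] ra by simp
      finally show "y \<in> bprod s r m U V" unfolding bprod_mem using aU b sab by metis
    qed
  qed
  have O: "openin T (bprod s r m U V)" using eq oN' by simp
  have I1: "inj_on s (bprod s r m U V)"
  proof (rule inj_onI)
    fix x y assume "x \<in> bprod s r m U V" "y \<in> bprod s r m U V" and e: "s x = s y"
    then obtain a b a' b' where ab: "a \<in> U" "b \<in> V" "s a = r b" "x = m a b"
      and ab': "a' \<in> U" "b' \<in> V" "s a' = r b'" "y = m a' b'" unfolding bprod_mem by blast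
    have G4: "a \<in> G" "b \<in> G" "a' \<in> G" "b' \<in> G" using ab ab' Ud(5) Vd(5) by auto
    have "s b = s b'" using e gm(2)[OF G4(1,2) ab(3)] gm(2)[OF G4(3,4) ab'(3)] ab ab' by simp
    then have "b = b'" using Vd(3) ab ab' by (meson inj_onD)
    then have "a = a'" using Ud(3) ab ab' by (metis inj_onD)
    then show "x = y" using ab ab' \<open>b = b'\<close> by simp
  qed
  have I2: "inj_on r (bprod s r m U V)"
  proof (rule inj_onI)
    fix x y assume "x \<in> bprod s r m U V" "y \<in> bprod s r m U V" and e: "r x = r y"
    then obtain a b a' b' where ab: "a \<in> U" "b \<in> V" "s a = r b" "x = m a b"
      and ab': "a' \<in> U" "b' \<in> V" "s a' = r b'" "y = m a' b'" unfolding bprod_mem by blast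
    have G4: "a \<in> G" "b \<in> G" "a' \<in> G" "b' \<in> G" using ab ab' Ud(5) Vd(5) by auto
    have "r a = r a'" using e gm(3)[OF G4(1,2) ab(3)] gm(3)[OF G4(3,4) ab'(3)] ab ab' by simp
    then have "a = a'" using Ud(4) ab ab' by (meson inj_onD)
    then have "b = b'" using Vd(4) ab ab' by (metis inj_onD)
    then show "x = y" using ab ab' \<open>a = a'\<close> by simp
  qed
  show ?thesis using cob_intro[OF O C I1 I2] .
qed

end



definition ind :: "'g set \<Rightarrow> 'g \<Rightarrow> 's::comm_semiring_1" where
  "ind W x = (if x \<in> W then 1 else 0)"

lemma A_iff: "f \<in> steinberg_algebra T s r TYPE('s::comm_semiring_1) \<longleftrightarrow>
  (\<exists>F c. finite F \<and> (\<forall>U\<in>F. cob T s r U) \<and> f = (\<lambda>x. \<Sum>U\<in>F. (c U :: 's) * ind U x))"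
  unfolding steinberg_algebra_def cob_def ind_def mem_Collect_eq by (rule refl)

lemma A_intro:
  assumes "finite I" "\<And>j. j \<in> I \<Longrightarrow> cob T s r (W j)"
  shows "(\<lambda>x. \<Sum>j\<in>I. (k j :: 's::comm_semiring_1) * ind (W j) x) \<in> steinberg_algebra T s r TYPE('s)"
proof -
  define c where "c U = (\<Sum>j\<in>{j \<in> I. W j = U}. k j)" for U
  have "(\<Sum>j\<in>I. k j * ind (W j) x) = (\<Sum>U\<in>W ` I. c U * ind U x)" for x
  proof -
    have "(\<Sum>j\<in>I. k j * ind (W j) x) = (\<Sum>U\<in>W ` I. \<Sum>j\<in>{j. j \<in> I \<and> W j = U}. k j * ind (W j) x)"
      by (rule sum.image_gen[OF assms(1)])
    also have "\<dots> = (\<Sum>U\<in>W ` I. \<Sum>j\<in>{j. j \<in> I \<and> W j = U}. k j * ind U x)"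
      by (intro sum.cong) auto
    also have "\<dots> = (\<Sum>U\<in>W ` I. c U * ind U x)"
      unfolding c_def by (simp add: sum_distrib_right)
    finally show ?thesis .
  qed
  then show ?thesis unfolding A_iff using assms by (intro exI[of _ "W ` I"] exI[of _ c]) auto
qed

lemma ind_A: "cob T s r W \<Longrightarrow> ind W \<in> steinberg_algebra T s r TYPE('s::comm_semiring_1)"
  using A_intro[of "{W}" T s r id "\<lambda>_. 1::'s"] by (simp add: id_def)

lemma zero_A: "(\<lambda>x. 0) \<in> steinberg_algebra T s r TYPE('s::comm_semiring_1)"
  using A_intro[of "{}" T s r id "\<lambda>_. 1::'s"] by simp

lemma scal_A: "cob T s r W \<Longrightarrow> (\<lambda>x. c * ind W x) \<in> steinberg_algebra T s r TYPE('s::comm_semiring_1)"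
  using A_intro[of "{W}" T s r id "\<lambda>_. c::'s"] by (simp add: id_def)

lemma add_A:
  assumes "f \<in> steinberg_algebra T s r TYPE('s::comm_semiring_1)" "g \<in> steinberg_algebra T s r TYPE('s)"
  shows "(\<lambda>x. f x + g x) \<in> steinberg_algebra T s r TYPE('s)"
proof -
  obtain F c where F: "finite F" "\<forall>U\<in>F. cob T s r U" "f = (\<lambda>x. \<Sum>U\<in>F. (c U :: 's) * ind U x)"
    using assms(1) unfolding A_iff by blast
  obtain F' c' where F': "finite F'" "\<forall>U\<in>F'. cob T s r U" "g = (\<lambda>x. \<Sum>U\<in>F'. (c' U :: 's) * ind U x)"
    using assms(2) unfolding A_iff by blast
  define k where "k = case_sum c c'"
  define W :: "'a set + 'a set \<Rightarrow> 'a set" where "W = case_sum id id"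
  have "(\<lambda>x. \<Sum>j\<in>F <+> F'. k j * ind (W j) x) \<in> steinberg_algebra T s r TYPE('s)"
    using F F' by (intro A_intro) (auto simp: W_def)
  moreover have "(\<lambda>x. \<Sum>j\<in>F <+> F'. k j * ind (W j) x) = (\<lambda>x. f x + g x)"
    using F F' by (simp add: sum.Plus k_def W_def o_def)
  ultimately show ?thesis by simp
qed

lemma inj_fiber_finite: "inj_on h U \<Longrightarrow> finite {a \<in> U. h a = u}"
proof -
  assume inj: "inj_on h U"
  have "{a \<in> U. h a = u} \<subseteq> (inv_into U h) ` {u}" using inj by (auto simp: inv_into_f_f)
  then show ?thesis by (rule finite_subset) simp
qed

context AG begin

lemma cobs_fiber_finite:
  assumes "finite F" "\<forall>U\<in>F. cob T s r U"
  shows "finite {a \<in> \<Union>F. r a = u}" "finite {a \<in> \<Union>F. s a = u}"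
proof -
  have "{a \<in> \<Union>F. r a = u} = (\<Union>U\<in>F. {a \<in> U. r a = u})" by auto
  moreover have "finite (\<Union>U\<in>F. {a \<in> U. r a = u})"
  proof (rule finite_UN_I[OF assms(1)])
    fix U assume "U \<in> F"
    then have "cob T s r U" using assms(2) by blast
    then show "finite {a \<in> U. r a = u}" by (intro inj_fiber_finite cob_dest(4))
  qed
  ultimately show "finite {a \<in> \<Union>F. r a = u}" by simp
  have "{a \<in> \<Union>F. s a = u} = (\<Union>U\<in>F. {a \<in> U. s a = u})" by auto
  moreover have "finite (\<Union>U\<in>F. {a \<in> U. s a = u})"
  proof (rule finite_UN_I[OF assms(1)])
    fix U assume "U \<in> F"
    then have "cob T s r U" using assms(2) by blast
    then show "finite {a \<in> U. s a = u}" by (intro inj_fiber_finite cob_dest(3))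
  qed
  ultimately show "finite {a \<in> \<Union>F. s a = u}" by simp
qed

lemma supp_sub: "(\<Sum>U\<in>F. (c U :: 's::comm_semiring_1) * ind U x) \<noteq> 0 \<Longrightarrow> x \<in> \<Union>F"
proof (rule ccontr)
  assume "(\<Sum>U\<in>F. c U * ind U x) \<noteq> 0" "x \<notin> \<Union>F"
  then have "\<forall>U\<in>F. c U * ind U x = 0" by (auto simp: ind_def)
  then have "(\<Sum>U\<in>F. c U * ind U x) = 0" by (rule sum.neutral)
  then show False using \<open>(\<Sum>U\<in>F. c U * ind U x) \<noteq> 0\<close> by simp
qed

lemma A_supp_G:
  assumes "f \<in> steinberg_algebra T s r TYPE('s::comm_semiring_1)" "f x \<noteq> 0" shows "x \<in> G"
proof -
  obtain F c where F: "finite F" "\<forall>U\<in>F. cob T s r U" "f = (\<lambda>x. \<Sum>U\<in>F. (c U :: 's) * ind U x)"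
    using assms(1) unfolding A_iff by blast
  have "(\<Sum>U\<in>F. c U * ind U x) \<noteq> 0" using assms(2) F(3) by simp
  then have "x \<in> \<Union>F" by (rule supp_sub)
  then obtain U where "U \<in> F" "x \<in> U" by blast
  then show ?thesis using F(2) cob_dest(5) by blast
qed

lemma A_fiber_finite:
  assumes "f \<in> steinberg_algebra T s r TYPE('s::comm_semiring_1)"
  shows "finite {a \<in> G. r a = u \<and> f a \<noteq> 0}" "finite {a \<in> G. s a = u \<and> f a \<noteq> 0}"
proof -
  obtain F c where F: "finite F" "\<forall>U\<in>F. cob T s r U" "f = (\<lambda>x. \<Sum>U\<in>F. (c U :: 's) * ind U x)"
    using assms(1) unfolding A_iff by blast
  have "{a \<in> G. r a = u \<and> f a \<noteq> 0} \<subseteq> {a \<in> \<Union>F. r a = u}"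
  proof
    fix a assume a: "a \<in> {a \<in> G. r a = u \<and> f a \<noteq> 0}"
    then have "(\<Sum>U\<in>F. c U * ind U a) \<noteq> 0" using F(3) by simp
    then have "a \<in> \<Union>F" by (rule supp_sub)
    then show "a \<in> {a \<in> \<Union>F. r a = u}" using a by simp
  qed
  then show "finite {a \<in> G. r a = u \<and> f a \<noteq> 0}" by (rule finite_subset) (use cobs_fiber_finite[OF F(1,2)] in blast)
  have "{a \<in> G. s a = u \<and> f a \<noteq> 0} \<subseteq> {a \<in> \<Union>F. s a = u}"
  proof
    fix a assume a: "a \<in> {a \<in> G. s a = u \<and> f a \<noteq> 0}"
    then have "(\<Sum>U\<in>F. c U * ind U a) \<noteq> 0" using F(3) by simp
    then have "a \<in> \<Union>F" by (rule supp_sub)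
    then show "a \<in> {a \<in> \<Union>F. s a = u}" using a by simp
  qed
  then show "finite {a \<in> G. s a = u \<and> f a \<noteq> 0}" by (rule finite_subset) (use cobs_fiber_finite[OF F(1,2)] in blast)
qed

end


context AG begin
lemma conv_formula:
  assumes F: "finite F" "\<forall>U\<in>F. cob T s r U" and F': "finite F'" "\<forall>U\<in>F'. cob T s r U"
  shows "convolution T s r m (\<lambda>x. \<Sum>U\<in>F. (c U :: 's::comm_semiring_1) * ind U x)
                             (\<lambda>x. \<Sum>V\<in>F'. (d V :: 's) * ind V x) x
       = (\<Sum>p\<in>F \<times> F'. (c (fst p) * d (snd p)) * ind (bprod s r m (fst p) (snd p)) x)"
proof -
  define t where "t = (\<lambda>x. \<Sum>U\<in>F. c U * ind U x)"
  define f where "f = (\<lambda>x. \<Sum>V\<in>F'. d V * ind V x)"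
  let ?P = "{(a, b) \<in> composable_pairs T s r. m a b = x \<and> t a \<noteq> 0 \<and> f b \<noteq> 0}"
  let ?Q = "{(a, b) \<in> composable_pairs T s r. m a b = x \<and> a \<in> \<Union>F \<and> b \<in> \<Union>F'}"
  have QS: "?Q \<subseteq> {a \<in> \<Union>F. r a = r x} \<times> {b \<in> \<Union>F'. s b = s x}"
    unfolding composable_pairs_def using gm by auto
  have finQ: "finite ?Q"
    by (rule finite_subset[OF QS], rule finite_cartesian_product, rule cobs_fiber_finite(1)[OF F], rule cobs_fiber_finite(2)[OF F'])
  have PQ: "?P \<subseteq> ?Q"
  proof
    fix p assume "p \<in> ?P"
    then obtain a b where p: "p = (a, b)" "(a, b) \<in> composable_pairs T s r" "m a b = x" "t a \<noteq> 0" "f b \<noteq> 0" by blast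
    have "a \<in> \<Union>F" using p(4) supp_sub unfolding t_def by metis
    moreover have "b \<in> \<Union>F'" using p(5) supp_sub unfolding f_def by metis
    ultimately show "p \<in> ?Q" using p by blast
  qed
  have "convolution T s r m t f x = (\<Sum>(a, b)\<in>?P. t a * f b)"
    unfolding convolution_def by simp
  also have "\<dots> = (\<Sum>(a, b)\<in>?Q. t a * f b)"
    by (rule sum.mono_neutral_left[OF finQ PQ]) auto
  also have "\<dots> = (\<Sum>q\<in>?Q. \<Sum>U\<in>F. \<Sum>V\<in>F'. (c U * d V) * (ind U (fst q) * ind V (snd q)))"
  proof (rule sum.cong[OF refl])
    fix q assume "q \<in> ?Q"
    obtain a b where q: "q = (a, b)" by fastforce
    have "t a * f b = (\<Sum>U\<in>F. \<Sum>V\<in>F'. (c U * ind U a) * (d V * ind V b))"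
      unfolding t_def f_def by (rule sum_product)
    also have "\<dots> = (\<Sum>U\<in>F. \<Sum>V\<in>F'. (c U * d V) * (ind U a * ind V b))"
      by (simp add: mult_ac)
    finally show "(case q of (a, b) \<Rightarrow> t a * f b) = (\<Sum>U\<in>F. \<Sum>V\<in>F'. (c U * d V) * (ind U (fst q) * ind V (snd q)))"
      using q by simp
  qed
  also have "\<dots> = (\<Sum>U\<in>F. \<Sum>q\<in>?Q. \<Sum>V\<in>F'. (c U * d V) * (ind U (fst q) * ind V (snd q)))"
    by (rule sum.swap)
  also have "\<dots> = (\<Sum>U\<in>F. \<Sum>V\<in>F'. \<Sum>q\<in>?Q. (c U * d V) * (ind U (fst q) * ind V (snd q)))"
    by (rule sum.cong[OF refl], rule sum.swap)
  also have "\<dots> = (\<Sum>U\<in>F. \<Sum>V\<in>F'. (c U * d V) * (\<Sum>q\<in>?Q. ind U (fst q) * ind V (snd q)))"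
    by (simp only: sum_distrib_left)
  also have "\<dots> = (\<Sum>U\<in>F. \<Sum>V\<in>F'. (c U * d V) * ind (bprod s r m U V) x)"
  proof (intro sum.cong refl)
    fix U V assume UV: "U \<in> F" "V \<in> F'"
    note Ud = cob_dest[OF bspec[OF F(2) UV(1)]] and Vd = cob_dest[OF bspec[OF F'(2) UV(2)]]
    let ?Q' = "{q \<in> ?Q. fst q \<in> U \<and> snd q \<in> V}"
    have "(\<Sum>q\<in>?Q. ind U (fst q) * ind V (snd q)) = (\<Sum>q\<in>?Q. if fst q \<in> U \<and> snd q \<in> V then 1 else (0::'s))"
      by (intro sum.cong) (auto simp: ind_def)
    also have "\<dots> = (\<Sum>q\<in>?Q'. 1)" by (subst sum.inter_filter[OF finQ]) (rule refl)
    also have "\<dots> = ind (bprod s r m U V) x"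
    proof (cases "x \<in> bprod s r m U V")
      case True
      then obtain a b where ab: "a \<in> U" "b \<in> V" "s a = r b" "x = m a b" unfolding bprod_mem by blast
      have "?Q' = {(a, b)}"
      proof
        show "{(a, b)} \<subseteq> ?Q'" using ab UV Ud(5) Vd(5) by (auto simp: composable_pairs_def)
        show "?Q' \<subseteq> {(a, b)}"
        proof
          fix q assume q: "q \<in> ?Q'"
          obtain a' b' where q': "q = (a', b')" by fastforce
          have G4: "a \<in> G" "b \<in> G" "a' \<in> G" "b' \<in> G" "s a' = r b'" "m a' b' = x"
            using q q' ab Ud(5) Vd(5) by (auto simp: composable_pairs_def)
          have "r a' = r a" using gm(3)[OF G4(3,4,5)] gm(3)[OF G4(1,2) ab(3)] G4 ab by simp
          then have "a' = a" using Ud(4) ab q q' by (auto dest: inj_onD)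
          have "s b' = s b" using gm(2)[OF G4(3,4,5)] gm(2)[OF G4(1,2) ab(3)] G4 ab by simp
          then have "b' = b" using Vd(3) ab q q' by (auto dest: inj_onD)
          show "q \<in> {(a, b)}" using q' \<open>a' = a\<close> \<open>b' = b\<close> by simp
        qed
      qed
      then show ?thesis using True by (simp add: ind_def)
    next
      case False
      have E: "?Q' = {}"
      proof (rule ccontr)
        assume "?Q' \<noteq> {}"
        then obtain a b where "(a, b) \<in> ?Q'" by auto
        then have "x \<in> bprod s r m U V" unfolding bprod_mem composable_pairs_def by auto
        then show False using False by simp
      qed
      show ?thesis by (subst E) (simp add: ind_def False)
    qed
    finally show "(c U * d V) * (\<Sum>q\<in>?Q. ind U (fst q) * ind V (snd q)) = (c U * d V) * ind (bprod s r m U V) x"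
      by simp
  qed
  also have "\<dots> = (\<Sum>p\<in>F \<times> F'. (c (fst p) * d (snd p)) * ind (bprod s r m (fst p) (snd p)) x)"
    by (simp add: sum.cartesian_product case_prod_beta)
  finally show ?thesis unfolding t_def f_def .
qed

lemma conv_A:
  assumes "t \<in> steinberg_algebra T s r TYPE('s::comm_semiring_1)" "f \<in> steinberg_algebra T s r TYPE('s)"
  shows "convolution T s r m t f \<in> steinberg_algebra T s r TYPE('s)"
proof -
  obtain F c where F: "finite F" "\<forall>U\<in>F. cob T s r U" "t = (\<lambda>x. \<Sum>U\<in>F. (c U :: 's) * ind U x)"
    using assms(1) unfolding A_iff by blast
  obtain F' d where F': "finite F'" "\<forall>U\<in>F'. cob T s r U" "f = (\<lambda>x. \<Sum>U\<in>F'. (d U :: 's) * ind U x)"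
    using assms(2) unfolding A_iff by blast
  have "convolution T s r m t f = (\<lambda>x. \<Sum>p\<in>F \<times> F'. (c (fst p) * d (snd p)) * ind (bprod s r m (fst p) (snd p)) x)"
    using conv_formula[OF F(1,2) F'(1,2)] F(3) F'(3) by auto
  moreover have "\<dots> \<in> steinberg_algebra T s r TYPE('s)"
    using F F' cob_prod by (intro A_intro) auto
  ultimately show ?thesis by simp
qed

end



lemma sum_nz:
  fixes h :: "'a \<Rightarrow> 's::comm_semiring_1"
  assumes zsf: "\<And>x y::'s. x + y = 0 \<Longrightarrow> x = 0"
  shows "finite A \<Longrightarrow> (\<forall>a\<in>A. h a \<noteq> 0) \<Longrightarrow> A \<noteq> {} \<Longrightarrow> sum h A \<noteq> 0"
proof (induction A rule: finite_induct)
  case empty then show ?case by simp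
next
  case (insert a A)
  then have e: "sum h (insert a A) = h a + sum h A" by simp
  have ha: "h a \<noteq> 0" using insert by simp
  show ?case
  proof
    assume "sum h (insert a A) = 0"
    then have "h a + sum h A = 0" using e by simp
    then have "h a = 0" by (rule zsf)
    then show False using ha by simp
  qed
qed

lemma conv_zero_iff:
  fixes t f :: "'g \<Rightarrow> 's::comm_semiring_1"
  assumes zsf: "\<And>x y::'s. x + y = 0 \<Longrightarrow> x = 0" and nzd: "\<And>x y::'s. x \<noteq> 0 \<Longrightarrow> y \<noteq> 0 \<Longrightarrow> x * y \<noteq> 0"
  shows "convolution T s r m t f x = 0 \<longleftrightarrow>
     \<not> (finite {(a, b) \<in> composable_pairs T s r. m a b = x \<and> t a \<noteq> 0 \<and> f b \<noteq> 0} \<and>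
        {(a, b) \<in> composable_pairs T s r. m a b = x \<and> t a \<noteq> 0 \<and> f b \<noteq> 0} \<noteq> {})"
    (is "?c = 0 \<longleftrightarrow> \<not> (finite ?P \<and> ?P \<noteq> {})")
proof -
  have c: "?c = (\<Sum>(a, b)\<in>?P. t a * f b)" unfolding convolution_def by simp
  show ?thesis
  proof (cases "finite ?P \<and> ?P \<noteq> {}")
    case True
    have "(\<Sum>(a, b)\<in>?P. t a * f b) \<noteq> 0"
      using sum_nz[OF zsf, where A="?P" and h="\<lambda>(a, b). t a * f b"] True nzd by auto
    then show ?thesis using True c by simp
  next
    case False
    have "(\<Sum>(a, b)\<in>?P. t a * f b) = 0"
    proof (cases "finite ?P")
      case True
      then have E: "?P = {}" using False by blast
      show ?thesis by (subst E) (rule sum.empty)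
    next
      case False
      then show ?thesis by (rule sum.infinite)
    qed
    then show ?thesis using c False by simp
  qed
qed

context AG begin

lemma nonempty_cob:
  assumes "g \<in> G" obtains W where "cob T s r W" "g \<in> W"
proof -
  have "openin X U0" by (metis openin_topspace topspace_subtopology_subset U0_sub)
  moreover have "s g \<in> U0" using assms unfolding unit_space_def by blast
  ultimately obtain W where "cob T s r W" "g \<in> W" "W \<subseteq> G" "s ` W \<subseteq> U0"
    using local_basis[OF assms openin_topspace assms] by blast
  then show ?thesis using that by blast
qed

lemma part1:
  assumes ne: "G \<noteq> {}" and sf: "semifield_ax TYPE('s::comm_semiring_1)"
    and cs: "congruence_simple (steinberg_algebra T s r TYPE('s)) (\<lambda>f g x. f x + g x) (convolution T s r m)"
  shows "is_field_sf TYPE('s) \<or> is_boolean_sf TYPE('s)"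
proof (cases "\<forall>x::'s. \<exists>y. x + y = 0")
  case True
  then show ?thesis using sf unfolding is_field_sf_def by blast
next
  case False
  then obtain a :: 's where a: "\<And>y. a + y \<noteq> 0" by blast
  have inv: "\<And>x::'s. x \<noteq> 0 \<Longrightarrow> \<exists>y. x * y = 1" using sf unfolding semifield_ax_def by blast
  have zsf: "x = 0" if "x + y = 0" for x y :: 's
  proof (rule ccontr)
    assume "x \<noteq> 0"
    then obtain x' where x': "x * x' = 1" using inv by blast
    have "(x + y) * (x' * a) = a + y * x' * a" using x' by (simp add: algebra_simps)
    then have "a + y * x' * a = 0" using that by simp
    then show False using a by blast
  qed
  have zsf2: "x + y = 0 \<longleftrightarrow> x = 0 \<and> y = 0" for x y :: 's
    using zsf[of x y] zsf[of y x] by (auto simp: add.commute)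
  have nzd: "x * y \<noteq> 0" if nx: "x \<noteq> 0" and ny: "y \<noteq> 0" for x y :: 's
  proof
    assume "x * y = 0"
    obtain x' where "x * x' = 1" using inv nx by blast
    then have "y = x' * (x * y)" by (simp add: mult.assoc[symmetric] mult.commute[of x'])
    then show False using \<open>x * y = 0\<close> ny by simp
  qed
  let ?A = "steinberg_algebra T s r TYPE('s)"
  define R where "R = {(f, g). f \<in> ?A \<and> g \<in> ?A \<and> (\<forall>x. (f x = 0) = (g x = 0))}"
  have cong: "hemiring_congruence ?A (\<lambda>f g x. f x + g x) (convolution T s r m) R"
    unfolding hemiring_congruence_def
  proof (intro conjI)
    show "equiv ?A R" unfolding equiv_def refl_on_def sym_def trans_def R_def by auto
    show "\<forall>(x, y)\<in>R. \<forall>t\<in>?A. ((\<lambda>z. t z + x z), (\<lambda>z. t z + y z)) \<in> R \<and>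
        (convolution T s r m t x, convolution T s r m t y) \<in> R \<and>
        (convolution T s r m x t, convolution T s r m y t) \<in> R"
    proof (clarify)
      fix x y t assume xy: "(x, y) \<in> R" and t: "t \<in> ?A"
      have xA: "x \<in> ?A" and yA: "y \<in> ?A" and z: "\<And>z. (x z = 0) = (y z = 0)" using xy R_def by auto
      have "((\<lambda>z. t z + x z), (\<lambda>z. t z + y z)) \<in> R"
        unfolding R_def using add_A[OF t xA] add_A[OF t yA] z zsf2 by auto
      moreover have "(convolution T s r m t x, convolution T s r m t y) \<in> R"
        unfolding R_def using conv_A[OF t xA] conv_A[OF t yA] z
        by (simp add: conv_zero_iff[OF zsf nzd])
      moreover have "(convolution T s r m x t, convolution T s r m y t) \<in> R"
        unfolding R_def using conv_A[OF xA t] conv_A[OF yA t] z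
        by (simp add: conv_zero_iff[OF zsf nzd])
      ultimately show "((\<lambda>z. t z + x z), (\<lambda>z. t z + y z)) \<in> R \<and>
        (convolution T s r m t x, convolution T s r m t y) \<in> R \<and>
        (convolution T s r m x t, convolution T s r m y t) \<in> R" by blast
    qed
  qed
  obtain g where g: "g \<in> G" using ne by blast
  obtain W where W: "cob T s r W" "g \<in> W" using nonempty_cob[OF g] by blast
  have indW: "ind W \<in> ?A" using ind_A[OF W(1)] .
  have "R = ?A \<times> ?A \<or> R = Id_on ?A" using cs cong unfolding congruence_simple_def by blast
  moreover have "R \<noteq> ?A \<times> ?A"
  proof
    assume "R = ?A \<times> ?A"
    then have "((\<lambda>x. 0), ind W) \<in> R" using zero_A indW by blast
    then have "ind W g = (0::'s)" unfolding R_def by auto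
    then show False using W(2) by (simp add: ind_def)
  qed
  ultimately have RI: "R = Id_on ?A" by blast
  have one: "c = 1" if "c \<noteq> 0" for c :: 's
  proof -
    have "((\<lambda>x. c * ind W x), ind W) \<in> R"
      unfolding R_def using scal_A[OF W(1)] indW that by (auto simp: ind_def)
    then have "(\<lambda>x. c * ind W x) = ind W" using RI by auto
    then have "c * ind W g = ind W g" by (rule fun_cong)
    then show ?thesis using W(2) by (simp add: ind_def)
  qed
  have "is_boolean_sf TYPE('s)" unfolding is_boolean_sf_def
  proof (intro exI[of _ "\<lambda>x::'s. x \<noteq> 0"] conjI allI)
    show "bij (\<lambda>x::'s. x \<noteq> 0)"
    proof (rule bijI)
      show "inj (\<lambda>x::'s. x \<noteq> 0)"
      proof (rule injI)
        fix x y :: 's assume "(x \<noteq> 0) = (y \<noteq> 0)"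
        then show "x = y" using one[of x] one[of y] by (cases "x = 0") auto
      qed
      show "surj (\<lambda>x::'s. x \<noteq> 0)"
        unfolding surj_def
      proof
        fix b :: bool
        show "\<exists>x::'s. b = (x \<noteq> 0)"
        proof (cases b)
          case True then show ?thesis by (intro exI[of _ "1::'s"]) simp
        next
          case False then show ?thesis by (intro exI[of _ "0::'s"]) simp
        qed
      qed
    qed
    show "((0::'s) \<noteq> 0) = False" by simp
    show "((1::'s) \<noteq> 0) = True" by simp
    fix x y :: 's
    show "(x + y \<noteq> 0) = (x \<noteq> 0 \<or> y \<noteq> 0)" using zsf2 by blast
    show "(x * y \<noteq> 0) = (x \<noteq> 0 \<and> y \<noteq> 0)" using nzd by auto
  qed
  then show ?thesis by blast
qed

end



lemma conv_cong_right:
  assumes "\<And>a b. (a, b) \<in> composable_pairs T s r \<Longrightarrow> m a b = x \<Longrightarrow> f b = g b"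
  shows "convolution T s r m t f x = convolution T s r m t g x"
proof -
  have E: "{(a, b) \<in> composable_pairs T s r. m a b = x \<and> t a \<noteq> 0 \<and> f b \<noteq> 0}
         = {(a, b) \<in> composable_pairs T s r. m a b = x \<and> t a \<noteq> 0 \<and> g b \<noteq> 0}"
    using assms by auto
  show ?thesis unfolding convolution_def
    by (subst E, rule sum.cong[OF refl]) (use assms in auto)
qed

lemma conv_cong_left:
  assumes "\<And>a b. (a, b) \<in> composable_pairs T s r \<Longrightarrow> m a b = x \<Longrightarrow> f a = g a"
  shows "convolution T s r m f t x = convolution T s r m g t x"
proof -
  have E: "{(a, b) \<in> composable_pairs T s r. m a b = x \<and> f a \<noteq> 0 \<and> t b \<noteq> 0}
         = {(a, b) \<in> composable_pairs T s r. m a b = x \<and> g a \<noteq> 0 \<and> t b \<noteq> 0}"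
    using assms by auto
  show ?thesis unfolding convolution_def
    by (subst E, rule sum.cong[OF refl]) (use assms in auto)
qed

context AG begin

lemma part_min:
  assumes cs: "congruence_simple (steinberg_algebra T s r TYPE('s::comm_semiring_1)) (\<lambda>f g x. f x + g x) (convolution T s r m)"
  shows "minimal_groupoid T s r"
  unfolding minimal_groupoid_def
proof (intro allI impI)
  fix D assume D: "openin X D \<and> invariant_set T s r D"
  show "D = {} \<or> D = U0"
  proof (rule ccontr)
    assume nt: "\<not> (D = {} \<or> D = U0)"
    have DU: "D \<subseteq> U0" and inv: "\<And>g. g \<in> G \<Longrightarrow> s g \<in> D \<Longrightarrow> r g \<in> D"
      using D unfolding invariant_set_def by auto
    have inv2: "r g \<notin> D" if "g \<in> G" "s g \<notin> D" for g
      using inv[of "i g"] gf[OF that(1)] that by auto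
    let ?A = "steinberg_algebra T s r TYPE('s)"
    define R where "R = {(f, g). f \<in> ?A \<and> g \<in> ?A \<and> (\<forall>x. (x \<in> G \<and> s x \<in> D) \<or> f x = g x)}"
    have cong: "hemiring_congruence ?A (\<lambda>f g x. f x + g x) (convolution T s r m) R"
      unfolding hemiring_congruence_def
    proof (intro conjI)
      show "equiv ?A R" unfolding equiv_def refl_on_def sym_def trans_def R_def by (auto; metis)
      show "\<forall>(x, y)\<in>R. \<forall>t\<in>?A. ((\<lambda>z. t z + x z), (\<lambda>z. t z + y z)) \<in> R \<and>
          (convolution T s r m t x, convolution T s r m t y) \<in> R \<and>
          (convolution T s r m x t, convolution T s r m y t) \<in> R"
      proof (clarify)
        fix f g t assume fg: "(f, g) \<in> R" and t: "t \<in> ?A"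
        have fA: "f \<in> ?A" and gA: "g \<in> ?A" and z: "\<And>z. (z \<in> G \<and> s z \<in> D) \<or> f z = g z"
          using fg R_def by auto
        have "((\<lambda>z. t z + f z), (\<lambda>z. t z + g z)) \<in> R"
          unfolding R_def using add_A[OF t fA] add_A[OF t gA] z by force
        moreover have "(convolution T s r m t f, convolution T s r m t g) \<in> R"
        proof -
          have "convolution T s r m t f x = convolution T s r m t g x" if x: "\<not> (x \<in> G \<and> s x \<in> D)" for x
          proof (rule conv_cong_right)
            fix a b assume ab: "(a, b) \<in> composable_pairs T s r" "m a b = x"
            then have G2: "a \<in> G" "b \<in> G" "s a = r b" unfolding composable_pairs_def by auto
            have "x \<in> G" "s x = s b" using gm[OF G2] ab by auto
            then have "s b \<notin> D" using x by auto
            then show "f b = g b" using z[of b] by auto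
          qed
          then show ?thesis unfolding R_def using conv_A[OF t fA] conv_A[OF t gA] by blast
        qed
        moreover have "(convolution T s r m f t, convolution T s r m g t) \<in> R"
        proof -
          have "convolution T s r m f t x = convolution T s r m g t x" if x: "\<not> (x \<in> G \<and> s x \<in> D)" for x
          proof (rule conv_cong_left)
            fix a b assume ab: "(a, b) \<in> composable_pairs T s r" "m a b = x"
            then have G2: "a \<in> G" "b \<in> G" "s a = r b" unfolding composable_pairs_def by auto
            have xG: "x \<in> G" and rx: "r x = r a" using gm[OF G2] ab by auto
            then have "s x \<notin> D" using x by auto
            then have "r x \<notin> D" using inv2 xG by blast
            then have "s a \<notin> D" using inv[OF G2(1)] rx by auto
            then show "f a = g a" using z[of a] by auto
          qed
          then show ?thesis unfolding R_def using conv_A[OF fA t] conv_A[OF gA t] by blast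
        qed
        ultimately show "((\<lambda>z. t z + f z), (\<lambda>z. t z + g z)) \<in> R \<and>
          (convolution T s r m t f, convolution T s r m t g) \<in> R \<and>
          (convolution T s r m f t, convolution T s r m g t) \<in> R" by blast
      qed
    qed
    have "R = ?A \<times> ?A \<or> R = Id_on ?A" using cs cong unfolding congruence_simple_def by blast
    moreover have "R \<noteq> ?A \<times> ?A"
    proof
      assume RA: "R = ?A \<times> ?A"
      obtain u where u: "u \<in> U0" "u \<notin> D" using nt DU by blast
      have uG: "u \<in> G" and su: "s u = u" using unit[OF u(1)] by auto
      obtain W where W: "cob T s r W" "u \<in> W" using nonempty_cob[OF uG] by blast
      have "((\<lambda>x. 0), ind W) \<in> R" using RA zero_A ind_A[OF W(1)] by blast
      then have "(u \<in> G \<and> s u \<in> D) \<or> 0 = (ind W u :: 's)" unfolding R_def by auto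
      then show False using u su W(2) by (simp add: ind_def)
    qed
    moreover have "R \<noteq> Id_on ?A"
    proof
      assume RI: "R = Id_on ?A"
      obtain u where u: "u \<in> D" using nt by blast
      have uG: "u \<in> G" and su: "s u = u" using unit DU u by auto
      obtain W where W: "cob T s r W" "u \<in> W" "W \<subseteq> G" "s ` W \<subseteq> D"
        using local_basis[OF uG openin_topspace uG] D su u by metis
      have "((\<lambda>x. 0), ind W) \<in> R"
        unfolding R_def using zero_A ind_A[OF W(1)] W(3,4) by (auto simp: ind_def)
      then have "(\<lambda>x. 0) = (ind W :: 'g \<Rightarrow> 's)" using RI by auto
      then have "0 = (ind W u :: 's)" by (rule fun_cong)
      then show False using W(2) by (simp add: ind_def)
    qed
    ultimately show False by blast
  qed
qed

end



definition Msum :: "('g \<Rightarrow> 'g) \<Rightarrow> ('g \<Rightarrow> 'g) \<Rightarrow> 'g set \<Rightarrow> ('g \<Rightarrow> 's::comm_semiring_1) \<Rightarrow> 'g \<Rightarrow> 'g \<Rightarrow> 's" where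
  "Msum s r G f u v = (\<Sum>x\<in>{x \<in> G. r x = u \<and> s x = v \<and> f x \<noteq> 0}. f x)"

lemma ind_nz [simp]: "(ind W x \<noteq> (0::'s::comm_semiring_1)) \<longleftrightarrow> x \<in> W"
  by (simp add: ind_def)

lemma Msup:
  assumes "finite S" "{x \<in> G. r x = u \<and> s x = v \<and> f x \<noteq> 0} \<subseteq> S" "S \<subseteq> {x \<in> G. r x = u \<and> s x = v}"
  shows "Msum s r G f u v = sum f S"
  unfolding Msum_def by (rule sum.mono_neutral_left[OF assms(1,2)]) (use assms(3) in auto)

context AG begin

lemma M_add:
  assumes "t \<in> steinberg_algebra T s r TYPE('s::comm_semiring_1)" "f \<in> steinberg_algebra T s r TYPE('s)"
  shows "Msum s r G (\<lambda>x. t x + f x) u v = Msum s r G t u v + Msum s r G f u v"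
proof -
  let ?S = "{x \<in> G. r x = u \<and> s x = v \<and> (t x \<noteq> 0 \<or> f x \<noteq> 0)}"
  have "?S \<subseteq> {x \<in> G. r x = u \<and> t x \<noteq> 0} \<union> {x \<in> G. r x = u \<and> f x \<noteq> 0}" by auto
  then have fin: "finite ?S"
    using A_fiber_finite(1)[OF assms(1)] A_fiber_finite(1)[OF assms(2)] by (meson finite_Un finite_subset)
  have "Msum s r G (\<lambda>x. t x + f x) u v = sum (\<lambda>x. t x + f x) ?S"
    by (rule Msup[OF fin]) auto
  also have "\<dots> = sum t ?S + sum f ?S" by (rule sum.distrib)
  also have "sum t ?S = Msum s r G t u v" by (rule Msup[OF fin, symmetric]) auto
  also have "sum f ?S = Msum s r G f u v" by (rule Msup[OF fin, symmetric]) auto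
  finally show ?thesis .
qed

lemma M_conv:
  assumes tA: "t \<in> steinberg_algebra T s r TYPE('s::comm_semiring_1)" and fA: "f \<in> steinberg_algebra T s r TYPE('s)"
  shows "Msum s r G (convolution T s r m t f) u w = (\<Sum>v\<in>{v. Msum s r G t u v \<noteq> 0}. Msum s r G t u v * Msum s r G f v w)"
proof -
  let ?Pa = "{a \<in> G. r a = u \<and> t a \<noteq> 0}"
  let ?Pb = "\<lambda>v. {b \<in> G. r b = v \<and> s b = w \<and> f b \<noteq> 0}"
  let ?Q = "{(a, b) \<in> composable_pairs T s r. r a = u \<and> s b = w \<and> t a \<noteq> 0 \<and> f b \<noteq> 0}"
  let ?mm = "\<lambda>(a, b). m a b"
  have finPa: "finite ?Pa" using A_fiber_finite(1)[OF tA] .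
  have finB: "finite {b \<in> G. s b = w \<and> f b \<noteq> 0}" using A_fiber_finite(2)[OF fA] .
  have QS: "?Q \<subseteq> ?Pa \<times> {b \<in> G. s b = w \<and> f b \<noteq> 0}" unfolding composable_pairs_def by auto
  have finQ: "finite ?Q" using finite_subset[OF QS] finPa finB by blast
  have finPb: "finite (?Pb v)" for v
    by (rule finite_subset[OF _ finB]) auto
  have Pg: "{(a, b) \<in> composable_pairs T s r. m a b = g \<and> t a \<noteq> 0 \<and> f b \<noteq> 0} = {p \<in> ?Q. ?mm p = g}"
    if g: "g \<in> G" "r g = u" "s g = w" for g
  proof (intro set_eqI iffI)
    fix p assume "p \<in> {(a, b) \<in> composable_pairs T s r. m a b = g \<and> t a \<noteq> 0 \<and> f b \<noteq> 0}"
    then obtain a b where p: "p = (a, b)" "(a, b) \<in> composable_pairs T s r" "m a b = g" "t a \<noteq> 0" "f b \<noteq> 0" by blast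
    then have "a \<in> G" "b \<in> G" "s a = r b" unfolding composable_pairs_def by auto
    then have "r a = u" "s b = w" using gm p g by auto
    then show "p \<in> {p \<in> ?Q. ?mm p = g}" using p by auto
  qed auto
  have mQ: "?mm ` ?Q \<subseteq> {x \<in> G. r x = u \<and> s x = w}"
    using gm unfolding composable_pairs_def by auto
  have supp: "{x \<in> G. r x = u \<and> s x = w \<and> convolution T s r m t f x \<noteq> 0} \<subseteq> ?mm ` ?Q"
  proof
    fix g assume g: "g \<in> {x \<in> G. r x = u \<and> s x = w \<and> convolution T s r m t f x \<noteq> 0}"
    have "{(a, b) \<in> composable_pairs T s r. m a b = g \<and> t a \<noteq> 0 \<and> f b \<noteq> 0} \<noteq> {}"
    proof
      assume E: "{(a, b) \<in> composable_pairs T s r. m a b = g \<and> t a \<noteq> 0 \<and> f b \<noteq> 0} = {}"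
      have "convolution T s r m t f g = 0" unfolding convolution_def E by simp
      then show False using g by simp
    qed
    then obtain p where "p \<in> {p \<in> ?Q. ?mm p = g}" using Pg g by blast
    then show "g \<in> ?mm ` ?Q" by force
  qed
  have "Msum s r G (convolution T s r m t f) u w = sum (convolution T s r m t f) (?mm ` ?Q)"
    by (rule Msup[OF finite_imageI[OF finQ] supp mQ])
  also have "\<dots> = (\<Sum>g\<in>?mm ` ?Q. \<Sum>p\<in>{p \<in> ?Q. ?mm p = g}. t (fst p) * f (snd p))"
  proof (rule sum.cong[OF refl])
    fix g assume "g \<in> ?mm ` ?Q"
    then have g: "g \<in> G" "r g = u" "s g = w" using mQ by auto
    show "convolution T s r m t f g = (\<Sum>p\<in>{p \<in> ?Q. ?mm p = g}. t (fst p) * f (snd p))"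
      unfolding convolution_def Pg[OF g] by (simp add: case_prod_beta)
  qed
  also have "\<dots> = (\<Sum>p\<in>?Q. t (fst p) * f (snd p))"
    by (rule sum.image_gen[OF finQ, symmetric])
  finally have L: "Msum s r G (convolution T s r m t f) u w = (\<Sum>p\<in>?Q. t (fst p) * f (snd p))" .
  have Mt: "Msum s r G t u v = (\<Sum>a\<in>{a \<in> ?Pa. s a = v}. t a)" for v
    unfolding Msum_def by (rule sum.cong) auto
  have Mf: "Msum s r G f v w = sum f (?Pb v)" for v
    unfolding Msum_def by (rule sum.cong) auto
  have sub: "{v. Msum s r G t u v \<noteq> 0} \<subseteq> s ` ?Pa"
  proof
    fix v assume "v \<in> {v. Msum s r G t u v \<noteq> 0}"
    show "v \<in> s ` ?Pa"
    proof (cases "{a \<in> ?Pa. s a = v} = {}")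
      case True
      then have "Msum s r G t u v = 0" unfolding Mt by (simp only: True sum.empty)
      then show ?thesis using \<open>v \<in> {v. Msum s r G t u v \<noteq> 0}\<close> by simp
    next
      case False
      then show ?thesis by blast
    qed
  qed
  have "(\<Sum>v\<in>{v. Msum s r G t u v \<noteq> 0}. Msum s r G t u v * Msum s r G f v w)
      = (\<Sum>v\<in>s ` ?Pa. Msum s r G t u v * Msum s r G f v w)"
    by (rule sum.mono_neutral_left[OF finite_imageI[OF finPa] sub]) auto
  also have "\<dots> = (\<Sum>v\<in>s ` ?Pa. \<Sum>a\<in>{a. a \<in> ?Pa \<and> s a = v}. t a * Msum s r G f (s a) w)"
    unfolding Mt by (intro sum.cong refl) (auto simp: sum_distrib_right)
  also have "\<dots> = (\<Sum>a\<in>?Pa. t a * Msum s r G f (s a) w)"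
    by (rule sum.image_gen[OF finPa, symmetric])
  also have "\<dots> = (\<Sum>a\<in>?Pa. \<Sum>b\<in>?Pb (s a). t a * f b)"
    unfolding Mf by (simp add: sum_distrib_left)
  also have "\<dots> = (\<Sum>p\<in>Sigma ?Pa (\<lambda>a. ?Pb (s a)). t (fst p) * f (snd p))"
  proof -
    have "(\<Sum>a\<in>?Pa. \<Sum>b\<in>?Pb (s a). t a * f b) = (\<Sum>(a, b)\<in>Sigma ?Pa (\<lambda>a. ?Pb (s a)). t a * f b)"
      by (rule sum.Sigma[OF finPa]) (simp add: finPb)
    moreover have "(\<lambda>(a, b). t a * f b) = (\<lambda>p. t (fst p) * f (snd p))" by (rule ext) (simp add: case_prod_beta)
    ultimately show ?thesis by simp
  qed
  also have "Sigma ?Pa (\<lambda>a. ?Pb (s a)) = ?Q"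
    unfolding composable_pairs_def by auto
  finally have R: "(\<Sum>v\<in>{v. Msum s r G t u v \<noteq> 0}. Msum s r G t u v * Msum s r G f v w) = (\<Sum>p\<in>?Q. t (fst p) * f (snd p))" .
  show ?thesis by (rule trans[OF L R[symmetric]])
qed

lemma part_eff:
  assumes cs: "congruence_simple (steinberg_algebra T s r TYPE('s::comm_semiring_1)) (\<lambda>f g x. f x + g x) (convolution T s r m)"
  shows "effective_groupoid T s r"
  unfolding effective_groupoid_def
proof
  show "U0 \<subseteq> T interior_of isotropy T s r"
  proof (rule interior_of_maximal[OF _ U0_open])
    show "U0 \<subseteq> isotropy T s r"
    proof
      fix u assume "u \<in> U0"
      then have "u \<in> G" "s u = u" "r u = u" using unit by blast+
      then show "u \<in> isotropy T s r" unfolding isotropy_def by simp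
    qed
  qed
  show "T interior_of isotropy T s r \<subseteq> U0"
  proof (rule ccontr)
    assume "\<not> T interior_of isotropy T s r \<subseteq> U0"
    then obtain \<gamma> where \<gamma>: "\<gamma> \<in> T interior_of isotropy T s r" "\<gamma> \<notin> U0" by blast
    have oI: "openin T (T interior_of isotropy T s r)" by simp
    have \<gamma>G: "\<gamma> \<in> G" using \<gamma>(1) interior_of_subset_topspace[of T "isotropy T s r"] by blast
    have XU: "topspace X = U0" using U0_sub by auto
    have "s \<gamma> \<in> U0" using \<gamma>G unfolding unit_space_def by blast
    have oX: "openin X (topspace X)" by (rule openin_topspace)
    obtain B where B: "cob T s r B" "\<gamma> \<in> B" "B \<subseteq> T interior_of isotropy T s r" "s ` B \<subseteq> topspace X"
      by (rule local_basis[OF \<gamma>G oI \<gamma>(1) oX]) (use XU \<open>s \<gamma> \<in> U0\<close> in auto)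
    have BI: "s b = r b" if b: "b \<in> B" for b
    proof -
      have "b \<in> isotropy T s r" using B(3) b interior_of_subset[of T "isotropy T s r"] by blast
      then show ?thesis by (simp add: isotropy_def)
    qed
    note Bd = cob_dest[OF B(1)]
    have sBU: "s ` B \<subseteq> U0" using Bd(5) unfolding unit_space_def by auto
    have sB: "cob T s r (s ` B)"
    proof (rule cob_intro)
      have "openin X (s ` B)" by (rule local_homeo_open[OF lhs Bd(1)])
      then show "openin T (s ` B)" by (rule openin_trans_full[OF _ U0_open])
      show "compactin T (s ` B)" using image_compactin[OF Bd(2) contsT] .
      show "inj_on s (s ` B)"
      proof (rule inj_onI)
        fix x y assume "x \<in> s ` B" "y \<in> s ` B" "s x = s y"
        then have "x \<in> U0" "y \<in> U0" using sBU by blast+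
        then have "s x = x" "s y = y" using unit(2) by blast+
        then show "x = y" using \<open>s x = s y\<close> by metis
      qed
      show "inj_on r (s ` B)"
      proof (rule inj_onI)
        fix x y assume "x \<in> s ` B" "y \<in> s ` B" "r x = r y"
        then have "x \<in> U0" "y \<in> U0" using sBU by blast+
        then have "r x = x" "r y = y" using unit(3) by blast+
        then show "x = y" using \<open>r x = r y\<close> by metis
      qed
    qed
    let ?A = "steinberg_algebra T s r TYPE('s)"
    define R where "R = {(f, g). f \<in> ?A \<and> g \<in> ?A \<and> (\<forall>u v. Msum s r G f u v = Msum s r G g u v)}"
    have cong: "hemiring_congruence ?A (\<lambda>f g x. f x + g x) (convolution T s r m) R"
      unfolding hemiring_congruence_def
    proof (intro conjI)
      show "equiv ?A R"
      proof (rule equivI)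
        show "R \<subseteq> ?A \<times> ?A"
        proof
          fix p assume "p \<in> R"
          then obtain a b where "p = (a, b)" "a \<in> ?A" "b \<in> ?A" unfolding R_def by blast
          then show "p \<in> ?A \<times> ?A" by simp
        qed
        show "refl_on ?A R"
        proof (rule refl_onI)
          fix f assume f: "f \<in> ?A"
          show "(f, f) \<in> R" unfolding R_def using f by simp
        qed
        show "sym R"
        proof (rule symI)
          fix a b assume "(a, b) \<in> R"
          then show "(b, a) \<in> R" unfolding R_def by simp
        qed
        show "trans R"
        proof (rule transI)
          fix a b c assume "(a, b) \<in> R" "(b, c) \<in> R"
          then show "(a, c) \<in> R" unfolding R_def by simp
        qed
      qed
      show "\<forall>(x, y)\<in>R. \<forall>t\<in>?A. ((\<lambda>z. t z + x z), (\<lambda>z. t z + y z)) \<in> R \<and>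
          (convolution T s r m t x, convolution T s r m t y) \<in> R \<and>
          (convolution T s r m x t, convolution T s r m y t) \<in> R"
      proof (clarify)
        fix f g t assume fg: "(f, g) \<in> R" and t: "t \<in> ?A"
        have fA: "f \<in> ?A" and gA: "g \<in> ?A" and z: "\<And>u v. Msum s r G f u v = Msum s r G g u v"
          using fg R_def by auto
        have zz: "Msum s r G f = Msum s r G g" using z by (intro ext)
        have "((\<lambda>z. t z + f z), (\<lambda>z. t z + g z)) \<in> R"
        proof -
          have "\<forall>u v. Msum s r G (\<lambda>z. t z + f z) u v = Msum s r G (\<lambda>z. t z + g z) u v"
            using M_add[OF t fA] M_add[OF t gA] z by simp
          then show ?thesis unfolding R_def using add_A[OF t fA] add_A[OF t gA] by simp
        qed
        moreover have "(convolution T s r m t f, convolution T s r m t g) \<in> R"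
        proof -
          have "\<forall>u v. Msum s r G (convolution T s r m t f) u v = Msum s r G (convolution T s r m t g) u v"
            using M_conv[OF t fA] M_conv[OF t gA] zz by simp
          then show ?thesis unfolding R_def using conv_A[OF t fA] conv_A[OF t gA] by simp
        qed
        moreover have "(convolution T s r m f t, convolution T s r m g t) \<in> R"
        proof -
          have "\<forall>u v. Msum s r G (convolution T s r m f t) u v = Msum s r G (convolution T s r m g t) u v"
            using M_conv[OF fA t] M_conv[OF gA t] zz by simp
          then show ?thesis unfolding R_def using conv_A[OF fA t] conv_A[OF gA t] by simp
        qed
        ultimately show "((\<lambda>z. t z + f z), (\<lambda>z. t z + g z)) \<in> R \<and>
          (convolution T s r m t f, convolution T s r m t g) \<in> R \<and>
          (convolution T s r m f t, convolution T s r m g t) \<in> R" by blast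
      qed
    qed
    have "R = ?A \<times> ?A \<or> R = Id_on ?A" using cs cong unfolding congruence_simple_def by blast
    moreover have "R \<noteq> ?A \<times> ?A"
    proof
      assume RA: "R = ?A \<times> ?A"
      have "((\<lambda>x. 0), ind B) \<in> R" using RA zero_A ind_A[OF B(1)] by blast
      then have e: "Msum s r G (\<lambda>x. 0) (r \<gamma>) (s \<gamma>) = (Msum s r G (ind B) (r \<gamma>) (s \<gamma>) :: 's)"
        unfolding R_def by simp
      have "Msum s r G (\<lambda>x. 0::'s) (r \<gamma>) (s \<gamma>) = 0" unfolding Msum_def by simp
      moreover have "{x \<in> G. r x = r \<gamma> \<and> s x = s \<gamma> \<and> ind B x \<noteq> (0::'s)} = {\<gamma>}"
      proof (intro set_eqI iffI)
        fix x assume "x \<in> {x \<in> G. r x = r \<gamma> \<and> s x = s \<gamma> \<and> ind B x \<noteq> (0::'s)}"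
        then have "x \<in> B" "r x = r \<gamma>" by auto
        then have "x = \<gamma>" using inj_onD[OF Bd(4)] B(2) by blast
        then show "x \<in> {\<gamma>}" by simp
      qed (use \<gamma>G B(2) in auto)
      then have "Msum s r G (ind B) (r \<gamma>) (s \<gamma>) = (1::'s)" unfolding Msum_def by (subst \<open>_ = {\<gamma>}\<close>) (simp add: ind_def B(2))
      ultimately show False using e by simp
    qed
    moreover have "R \<noteq> Id_on ?A"
    proof
      assume RI: "R = Id_on ?A"
      have "Msum s r G (ind B) u v = (Msum s r G (ind (s ` B)) u v :: 's)" for u v
      proof -
        let ?SB = "{x \<in> G. r x = u \<and> s x = v \<and> ind B x \<noteq> (0::'s)}"
        have E: "{x \<in> G. r x = u \<and> s x = v \<and> ind (s ` B) x \<noteq> (0::'s)} = s ` ?SB"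
        proof (intro set_eqI iffI)
          fix x assume "x \<in> {x \<in> G. r x = u \<and> s x = v \<and> ind (s ` B) x \<noteq> (0::'s)}"
          then obtain b where x: "x \<in> G" "r x = u" "s x = v" "b \<in> B" "x = s b" by auto
          have "x \<in> U0" using x sBU by blast
          then have "s x = x" "r x = x" using unit(2,3) by blast+
          then have "s b = u" "s b = v" using x by auto
          then show "x \<in> s ` ?SB" using x BI Bd(5) by auto
        next
          fix x assume "x \<in> s ` ?SB"
          then obtain b where b: "b \<in> G" "r b = u" "s b = v" "b \<in> B" "x = s b" by auto
          have "x \<in> s ` B" using b by blast
          moreover have "x \<in> G" "r x = u" "s x = v" using gf[OF b(1)] BI[OF b(4)] b by auto
          ultimately show "x \<in> {x \<in> G. r x = u \<and> s x = v \<and> ind (s ` B) x \<noteq> (0::'s)}" by simp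
        qed
        have inj: "inj_on s ?SB" using Bd(3) by (rule inj_on_subset) auto
        have "Msum s r G (ind (s ` B)) u v = (\<Sum>x\<in>s ` ?SB. ind (s ` B) x)" using E unfolding Msum_def by simp
        also have "\<dots> = (\<Sum>b\<in>?SB. ind (s ` B) (s b))" by (rule sum.reindex[OF inj, unfolded o_def])
        also have "\<dots> = (\<Sum>b\<in>?SB. ind B b)"
          by (rule sum.cong[OF refl]) (auto simp: ind_def split: if_splits)
        finally have C: "Msum s r G (ind (s ` B)) u v = (\<Sum>b\<in>?SB. ind B b)" .
        have D: "Msum s r G (ind B) u v = (\<Sum>b\<in>?SB. ind B b :: 's)" unfolding Msum_def by (rule refl)
        show ?thesis by (rule trans[OF D C[symmetric]])
      qed
      then have "(ind B, ind (s ` B)) \<in> R" unfolding R_def using ind_A[OF B(1)] ind_A[OF sB] by simp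
      then have "ind B = (ind (s ` B) :: 'g \<Rightarrow> 's)" using RI by auto
      then have "ind B \<gamma> = (ind (s ` B) \<gamma> :: 's)" by (rule fun_cong)
      moreover have "\<gamma> \<notin> s ` B" using \<gamma>(2) sBU by blast
      ultimately show False using B(2) by (simp add: ind_def)
    qed
    ultimately show False by blast
  qed
qed

end


theorem proposition3p2:
  fixes T :: "'g topology" and s r :: "'g \<Rightarrow> 'g" and m :: "'g \<Rightarrow> 'g \<Rightarrow> 'g" and i :: "'g \<Rightarrow> 'g"
  assumes "ample_groupoid T s r m i"
    and "topspace T \<noteq> {}"
    and "semifield_ax TYPE('s::comm_semiring_1)"
    and "congruence_simple (steinberg_algebra T s r TYPE('s)) (\<lambda>f g x. f x + g x)
           (convolution T s r m)"
  shows "(is_field_sf TYPE('s) \<or> is_boolean_sf TYPE('s))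
         \<and> minimal_groupoid T s r \<and> effective_groupoid T s r"
proof -
  interpret AG T s r m i using assms(1) by unfold_locales
  have "is_field_sf TYPE('s) \<or> is_boolean_sf TYPE('s)" using part1[OF assms(2) assms(3) assms(4)] .
  moreover have "minimal_groupoid T s r" using part_min[OF assms(4)] .
  moreover have "effective_groupoid T s r" using part_eff[OF assms(4)] .
  ultimately show ?thesis by blast
qed

end
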